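(* Let $p\in[1,\infty]$ and for $\lambda\in\mathbb{R}$ define operators on $L^p(0,1)$ by $(S_\lambda f)(t)=\int_0^1 e^{\lambda(t-s)}f(s)\,ds$ and $(T_\lambda f)(t)=\int_0^t e^{\lambda(t-s)}f(s)\,ds$. Then $S_\lambda\sim T_\lambda$ as $\lambda\to\infty$ through $\mathbb{R}^+$, i.e. $\|S_\lambda-T_\lambda\|_p/\|S_\lambda\|_p\to 0$. In particular $\|T_\lambda\|_p\sim C_p e^\lambda/\lambda$.
   Context: $C_p=1/(p^{1/p}q^{1/q})$ if $1<p<\infty$ where $1/p+1/q=1$, and $C_p=1$ if $p=1$ or $p=\infty$. $\|\cdot\|_p$ denotes the operator norm on $L^p(0,1)$. For operator sequences, $A_\lambda\sim B_\lambda$ means $\|A_\lambda-B_\lambda\|/\|A_\lambda\|\to0$; for numbers, $a_\lambda\sim b_\lambda$ means $a_\lambda/b_\lambda\to 1$. *)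

theory Defs
  imports "HOL-Probability.Essential_Supremum" "HOL-Library.Landau_Symbols"
begin

abbreviation I01 :: "real measure" where
  "I01 \<equiv> lebesgue_on {0<..<1}"

definition Lp_norm :: "ereal \<Rightarrow> (real \<Rightarrow> real) \<Rightarrow> ereal" where
  "Lp_norm p f =
     (if p = \<infinity> then esssup I01 (\<lambda>x. ereal \<bar>f x\<bar>)
      else (let J = (\<integral>\<^sup>+ x. ennreal (\<bar>f x\<bar> powr real_of_ereal p) \<partial>I01)
            in if J = \<infinity> then \<infinity> else ereal (enn2real J powr (1 / real_of_ereal p))))"

definition op_norm :: "ereal \<Rightarrow> ((real \<Rightarrow> real) \<Rightarrow> (real \<Rightarrow> real)) \<Rightarrow> ereal" where
  "op_norm p K = Sup {Lp_norm p (K f) | f. f \<in> borel_measurable I01 \<and> Lp_norm p f \<le> 1}"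

definition S_op :: "real \<Rightarrow> (real \<Rightarrow> real) \<Rightarrow> (real \<Rightarrow> real)" where
  "S_op l f = (\<lambda>t. \<integral> s. exp (l * (t - s)) * f s \<partial>I01)"

definition T_op :: "real \<Rightarrow> (real \<Rightarrow> real) \<Rightarrow> (real \<Rightarrow> real)" where
  "T_op l f = (\<lambda>t. \<integral> s. indicator {..<t} s * exp (l * (t - s)) * f s \<partial>I01)"

definition C_const :: "ereal \<Rightarrow> real" where
  "C_const p = (if p = 1 \<or> p = \<infinity> then 1
     else (let r = real_of_ereal p; q = r / (r - 1)
           in 1 / (r powr (1 / r) * q powr (1 / q))))"

end

theory Submission
  imports Defs "HOL-Real_Asymp.Real_Asymp"
begin


lemma id_meas_I01[measurable]: "(\<lambda>x::real. x) \<in> borel_measurable I01"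
  by (intro continuous_imp_measurable_on_sets_lebesgue continuous_intros) auto

lemma nn_exp:
  assumes "0 \<le> a" "a \<le> b" "b \<le> 1" "c \<noteq> 0"
  shows "(\<integral>\<^sup>+ t. ennreal (indicator {a<..<b} t * exp (c*t)) \<partial>I01) = ennreal ((exp (c*b) - exp (c*a))/c)"
proof -
  have hi: "((\<lambda>t. exp(c*t)) has_integral (exp(c*b)/c - exp(c*a)/c)) {a..b}"
    apply (rule fundamental_theorem_of_calculus[OF assms(2)])
    using assms(4) by (auto intro!: derivative_eq_intros simp: has_real_derivative_iff_has_vector_derivative[symmetric])
  hence hi2: "((\<lambda>t. exp(c*t)) has_integral ((exp(c*b) - exp(c*a))/c)) {a<..<b}"
    using has_integral_open_interval[of "\<lambda>t. exp(c*t)" _ a b] by (simp add: diff_divide_distrib)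
  have "(\<integral>\<^sup>+ t. ennreal (indicator {a<..<b} t * exp (c*t)) \<partial>I01)
      = (\<integral>\<^sup>+ t. ennreal (indicator {a<..<b} t * exp (c*t)) * indicator {0<..<1} t \<partial>completion lborel)"
    by (subst nn_integral_restrict_space) auto
  also have "\<dots> = (\<integral>\<^sup>+ t. ennreal (exp (c*t)) * indicator {a<..<b} t \<partial>lborel)"
    unfolding nn_integral_completion
    by (intro nn_integral_cong) (use assms in \<open>auto simp: indicator_def\<close>)
  also have "\<dots> = ennreal ((exp (c*b) - exp (c*a))/c)"
    by (rule nn_integral_has_integral_lebesgue'[OF _ hi2]) auto
  finally show ?thesis .
qed



lemma space_I01[simp]: "space I01 = {0<..<1}" by simp

lemma emeasure_I01: "emeasure I01 {0<..<1} = 1"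
  by (subst emeasure_restrict_space) auto

lemma nn_exp01:
  assumes "c \<noteq> 0"
  shows "(\<integral>\<^sup>+ t. ennreal (exp (c*t)) \<partial>I01) = ennreal ((exp c - 1)/c)"
proof -
  have "(\<integral>\<^sup>+ t. ennreal (exp (c*t)) \<partial>I01) = (\<integral>\<^sup>+ t. ennreal (indicator {0<..<1} t * exp (c*t)) \<partial>I01)"
    by (intro nn_integral_cong) auto
  also have "\<dots> = ennreal ((exp c - 1)/c)" using nn_exp[of 0 1 c] assms by simp
  finally show ?thesis .
qed

lemma nn_one: "(\<integral>\<^sup>+ t. 1 \<partial>I01) = 1"
  using emeasure_I01 by simp

definition Kc :: "ereal \<Rightarrow> real \<Rightarrow> real" where
  "Kc p l = (if p = \<infinity> then 1/l else if p = 1 then 1 else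
     (let r = real_of_ereal p; q = r/(r-1) in (q*l) powr (-1/q)))"

lemma J_le:
  assumes "p = ereal r" "r \<ge> 1" "Lp_norm p f \<le> 1"
  shows "(\<integral>\<^sup>+ x. ennreal (\<bar>f x\<bar> powr r) \<partial>I01) \<le> 1"
proof -
  define J where "J = (\<integral>\<^sup>+ x. ennreal (\<bar>f x\<bar> powr r) \<partial>I01)"
  have L: "Lp_norm p f = (if J = \<infinity> then \<infinity> else ereal (enn2real J powr (1 / r)))"
    using assms unfolding Lp_norm_def J_def by (simp add: Let_def)
  have "J \<noteq> \<infinity>" using assms(3) L by (auto split: if_splits)
  hence "enn2real J powr (1/r) \<le> 1" using assms(3) L by auto
  have "enn2real J \<le> 1"
  proof (rule ccontr)
    assume "\<not> enn2real J \<le> 1"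
    hence "1 < enn2real J powr (1/r)" using assms(2) by (intro gr_one_powr) auto
    thus False using \<open>enn2real J powr (1/r) \<le> 1\<close> by simp
  qed
  hence "ennreal (enn2real J) \<le> 1" by simp
  moreover have "ennreal (enn2real J) = J" using \<open>J \<noteq> \<infinity>\<close> by (simp add: less_top)
  ultimately show ?thesis unfolding J_def by simp
qed



lemma young_pt:
  fixes r q l G a s :: real
  assumes "r > 1" "q = r/(r-1)" "l > 0" "G = (q*l) powr (-1/q)"
  shows "exp(-l* s) * \<bar>a\<bar> \<le> (G/r) * \<bar>a\<bar> powr r + (G*l) * exp(-(q*l)* s)"
proof -
  have q1: "q > 1" using assms(1) unfolding assms(2) by (simp add: less_divide_eq)
  have rq: "1/r + 1/q = 1" using assms(1) unfolding assms(2) by (simp add: field_simps)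
  have G0: "G > 0" using assms q1 by simp
  have Y: "\<bar>a\<bar> * (exp(-l* s)/G) \<le> \<bar>a\<bar> powr r / r + (exp(-l* s)/G) powr q / q"
    using Youngs_inequality[of r q "\<bar>a\<bar>" "exp(-l* s)/G"] assms q1 rq G0 by simp
  have "(exp(-l* s)/G) powr q = exp(-l* s) powr q / G powr q"
    using G0 by (simp add: powr_divide)
  also have "exp(-l* s) powr q = exp(-(q*l)* s)" by (simp add: powr_def)
  also have "G powr q = 1/(q*l)"
  proof -
    have "G powr q = (q*l) powr (-1/q*q)" unfolding assms(4) by (rule powr_powr)
    also have "-1/q*q = -1" using q1 by simp
    also have "(q*l) powr (-1) = 1/(q*l)" using q1 assms(3) by (simp add: powr_minus_divide)
    finally show ?thesis .
  qed
  finally have e: "(exp(-l* s)/G) powr q = (q*l) * exp(-(q*l)* s)" by simp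
  have "exp(-l* s) * \<bar>a\<bar> = G * (\<bar>a\<bar> * (exp(-l* s)/G))" using G0 by simp
  also have "\<dots> \<le> G * (\<bar>a\<bar> powr r / r + (exp(-l* s)/G) powr q / q)"
    using Y G0 by (intro mult_left_mono) auto
  also have "\<dots> = (G/r) * \<bar>a\<bar> powr r + (G*l) * exp(-(q*l)* s)"
    unfolding e using q1 by (simp add: field_simps)
  finally show ?thesis .
qed

lemma young_pt1:
  fixes r q a :: real
  assumes "r > 1" "q = r/(r-1)"
  shows "\<bar>a\<bar> \<le> (1/r) * \<bar>a\<bar> powr r + 1/q"
proof -
  have q1: "q > 1" using assms(1) unfolding assms(2) by (simp add: less_divide_eq)
  have rq: "1/r + 1/q = 1" using assms(1) unfolding assms(2) by (simp add: field_simps)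
  show ?thesis
    using Youngs_inequality[of r q "\<bar>a\<bar>" 1] assms q1 rq by simp
qed

lemma holder:
  assumes p: "1 \<le> p" and f: "f \<in> borel_measurable I01" and n: "Lp_norm p f \<le> 1" and l: "l > 0"
  shows "(\<integral>\<^sup>+ s. ennreal (exp(-l* s) * \<bar>f s\<bar>) \<partial>I01) \<le> ennreal (Kc p l)"
    and "(\<integral>\<^sup>+ s. ennreal \<bar>f s\<bar> \<partial>I01) \<le> 1"
proof -
  note fm[measurable] = f
  have "(\<integral>\<^sup>+ s. ennreal (exp(-l* s) * \<bar>f s\<bar>) \<partial>I01) \<le> ennreal (Kc p l) \<and>
        (\<integral>\<^sup>+ s. ennreal \<bar>f s\<bar> \<partial>I01) \<le> 1"
  proof (cases "p = \<infinity>")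
    case True
    have le1: "esssup I01 (\<lambda>x. ereal \<bar>f x\<bar>) \<le> 1" using n True by (simp add: Lp_norm_def)
    have ae: "AE x in I01. \<bar>f x\<bar> \<le> 1"
      using esssup_AE[where M=I01 and f="\<lambda>x. ereal \<bar>f x\<bar>"]
    proof (rule eventually_mono)
      fix x assume "ereal \<bar>f x\<bar> \<le> esssup I01 (\<lambda>x. ereal \<bar>f x\<bar>)"
      hence "ereal \<bar>f x\<bar> \<le> 1" using le1 by (rule order_trans)
      thus "\<bar>f x\<bar> \<le> 1" by simp
    qed
    have "(\<integral>\<^sup>+ s. ennreal (exp(-l* s) * \<bar>f s\<bar>) \<partial>I01) \<le> (\<integral>\<^sup>+ s. ennreal (exp((-l)* s)) \<partial>I01)"
      using ae by (intro nn_integral_mono_AE) (auto elim!: eventually_mono intro!: ennreal_leI mult_left_le)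
    also have "\<dots> = ennreal ((exp (-l) - 1)/(-l))" using l by (intro nn_exp01) auto
    also have "\<dots> \<le> ennreal (Kc p l)" using l True
      by (intro ennreal_leI) (auto simp: Kc_def field_simps)
    finally have 1: "(\<integral>\<^sup>+ s. ennreal (exp(-l* s) * \<bar>f s\<bar>) \<partial>I01) \<le> ennreal (Kc p l)" .
    have "(\<integral>\<^sup>+ s. ennreal \<bar>f s\<bar> \<partial>I01) \<le> (\<integral>\<^sup>+ s. 1 \<partial>I01)"
      using ae by (intro nn_integral_mono_AE) (auto elim!: eventually_mono)
    with nn_one have "(\<integral>\<^sup>+ s. ennreal \<bar>f s\<bar> \<partial>I01) \<le> 1" by simp
    with 1 show ?thesis by simp
  next
    case False
    then obtain r where pr: "p = ereal r" using p by (cases p) auto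
    have r1: "r \<ge> 1" using p pr by simp
    have J: "(\<integral>\<^sup>+ x. ennreal (\<bar>f x\<bar> powr r) \<partial>I01) \<le> 1" by (rule J_le[OF pr r1 n])
    show ?thesis
    proof (cases "r = 1")
      case True
      have J1: "(\<integral>\<^sup>+ s. ennreal \<bar>f s\<bar> \<partial>I01) \<le> 1" using J True by simp
      have "(\<integral>\<^sup>+ s. ennreal (exp(-l* s) * \<bar>f s\<bar>) \<partial>I01) \<le> (\<integral>\<^sup>+ s. ennreal \<bar>f s\<bar> \<partial>I01)"
        using l by (intro nn_integral_mono ennreal_leI) (auto intro!: mult_left_le_one_le)
      also have "\<dots> \<le> ennreal (Kc p l)" using J1 True pr by (simp add: Kc_def)
      finally show ?thesis using J1 by simp
    next
      case False
      hence r1': "r > 1" using r1 by simp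
      define q where "q = r/(r-1)"
      have q1: "q > 1" using r1' by (simp add: q_def less_divide_eq)
      have rq: "1/r + 1/q = 1" using r1' by (simp add: q_def field_simps)
      define G where "G = (q*l) powr (-1/q)"
      have G0: "G > 0" using l q1 by (simp add: G_def)
      have pn: "p \<noteq> \<infinity>" "p \<noteq> 1" using pr r1' by auto
      have KG: "Kc p l = G" unfolding Kc_def G_def q_def Let_def using pn pr
        by (simp only: if_False real_of_ereal.simps)
      have "(\<integral>\<^sup>+ s. ennreal (exp(-l* s) * \<bar>f s\<bar>) \<partial>I01)
           \<le> (\<integral>\<^sup>+ s. ennreal ((G/r) * \<bar>f s\<bar> powr r) + ennreal ((G*l) * exp(-(q*l)* s)) \<partial>I01)"
      proof (intro nn_integral_mono)
        fix s
        have "exp(-l* s) * \<bar>f s\<bar> \<le> (G/r) * \<bar>f s\<bar> powr r + (G*l) * exp(-(q*l)* s)"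
          by (rule young_pt[OF r1' q_def l G_def])
        hence "ennreal (exp(-l* s) * \<bar>f s\<bar>) \<le> ennreal ((G/r) * \<bar>f s\<bar> powr r + (G*l) * exp(-(q*l)* s))"
          by (rule ennreal_leI)
        also have "\<dots> = ennreal ((G/r) * \<bar>f s\<bar> powr r) + ennreal ((G*l) * exp(-(q*l)* s))"
          using G0 r1' l by (intro ennreal_plus) auto
        finally show "ennreal (exp(-l* s) * \<bar>f s\<bar>) \<le> ennreal ((G/r) * \<bar>f s\<bar> powr r) + ennreal ((G*l) * exp(-(q*l)* s))" .
      qed
      also have "\<dots> = (\<integral>\<^sup>+ s. ennreal (G/r) * ennreal (\<bar>f s\<bar> powr r) \<partial>I01)
                      + (\<integral>\<^sup>+ s. ennreal (G*l) * ennreal (exp((-(q*l))* s)) \<partial>I01)"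
      proof -
        have "(\<integral>\<^sup>+ s. ennreal ((G/r) * \<bar>f s\<bar> powr r) + ennreal ((G*l) * exp(-(q*l)* s)) \<partial>I01)
          = (\<integral>\<^sup>+ s. ennreal (G/r) * ennreal (\<bar>f s\<bar> powr r) + ennreal (G*l) * ennreal (exp((-(q*l))* s)) \<partial>I01)"
          using G0 r1' l by (intro nn_integral_cong arg_cong2[where f="(+)"] ennreal_mult) auto
        also have "\<dots> = (\<integral>\<^sup>+ s. ennreal (G/r) * ennreal (\<bar>f s\<bar> powr r) \<partial>I01)
                      + (\<integral>\<^sup>+ s. ennreal (G*l) * ennreal (exp((-(q*l))* s)) \<partial>I01)"
          by (rule nn_integral_add) measurable
        finally show ?thesis .
      qed
      also have "\<dots> = ennreal (G/r) * (\<integral>\<^sup>+ s. ennreal (\<bar>f s\<bar> powr r) \<partial>I01)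
                      + ennreal (G*l) * (\<integral>\<^sup>+ s. ennreal (exp((-(q*l))* s)) \<partial>I01)"
        by (intro arg_cong2[where f="(+)"] nn_integral_cmult) measurable
      also have "\<dots> \<le> ennreal (G/r) * 1 + ennreal (G*l) * ennreal ((exp (-(q*l)) - 1)/(-(q*l)))"
      proof -
        have "(\<integral>\<^sup>+ s. ennreal (exp((-(q*l))* s)) \<partial>I01) = ennreal ((exp (-(q*l)) - 1)/(-(q*l)))"
          using q1 l by (intro nn_exp01) auto
        thus ?thesis using J by (intro add_mono mult_left_mono) auto
      qed
      also have "\<dots> = ennreal (G/r + G*l*((exp (-(q*l)) - 1)/(-(q*l))))"
      proof -
        define E where "E = (exp (-(q*l)) - 1)/(-(q*l))"
        have E0: "0 \<le> E" unfolding E_def using q1 l by (intro divide_nonpos_neg) auto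
        have "ennreal (G/r) * 1 + ennreal (G*l) * ennreal E = ennreal (G/r) + ennreal (G*l*E)"
          using G0 l E0 by (simp add: ennreal_mult)
        also have "\<dots> = ennreal (G/r + G*l*E)"
          using G0 l E0 r1' by (intro ennreal_plus[symmetric]) auto
        finally show ?thesis unfolding E_def .
      qed
      also have "\<dots> \<le> ennreal (G/r + G/q)"
      proof (intro ennreal_leI add_left_mono)
        have "G*l*((exp (-(q*l)) - 1)/(-(q*l))) = (G/q) * (1 - exp (-(q*l)))"
          using l q1 by (simp add: field_simps)
        also have "\<dots> \<le> G/q" using G0 q1 by (intro mult_left_le) auto
        finally show "G*l*((exp (-(q*l)) - 1)/(-(q*l))) \<le> G/q" .
      qed
      also have "G/r + G/q = G"
      proof -
        have "G/r + G/q = G * (1/r + 1/q)" by (simp add: distrib_left)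
        thus ?thesis using rq by simp
      qed
      finally have 1: "(\<integral>\<^sup>+ s. ennreal (exp(-l* s) * \<bar>f s\<bar>) \<partial>I01) \<le> ennreal (Kc p l)" using KG by simp
      have "(\<integral>\<^sup>+ s. ennreal \<bar>f s\<bar> \<partial>I01) \<le> (\<integral>\<^sup>+ s. ennreal (1/r) * ennreal (\<bar>f s\<bar> powr r) + ennreal (1/q) \<partial>I01)"
      proof (intro nn_integral_mono)
        fix s
        have "ennreal \<bar>f s\<bar> \<le> ennreal ((1/r) * \<bar>f s\<bar> powr r + 1/q)"
          by (intro ennreal_leI young_pt1[OF r1' q_def])
        also have "\<dots> = ennreal ((1/r) * \<bar>f s\<bar> powr r) + ennreal (1/q)"
          using r1' q1 by (intro ennreal_plus) auto
        also have "ennreal ((1/r) * \<bar>f s\<bar> powr r) = ennreal (1/r) * ennreal (\<bar>f s\<bar> powr r)"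
          using r1' by (intro ennreal_mult) auto
        finally show "ennreal \<bar>f s\<bar> \<le> ennreal (1/r) * ennreal (\<bar>f s\<bar> powr r) + ennreal (1/q)" .
      qed
      also have "\<dots> = (\<integral>\<^sup>+ s. ennreal (1/r) * ennreal (\<bar>f s\<bar> powr r) \<partial>I01) + (\<integral>\<^sup>+ s. ennreal (1/q) \<partial>I01)"
        by (rule nn_integral_add) measurable
      also have "(\<integral>\<^sup>+ s. ennreal (1/r) * ennreal (\<bar>f s\<bar> powr r) \<partial>I01) = ennreal (1/r) * (\<integral>\<^sup>+ s. ennreal (\<bar>f s\<bar> powr r) \<partial>I01)"
        by (rule nn_integral_cmult) measurable
      also have "(\<integral>\<^sup>+ s. ennreal (1/q) \<partial>I01) = ennreal (1/q)"
        using emeasure_I01 by simp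
      also have "ennreal (1/r) * (\<integral>\<^sup>+ s. ennreal (\<bar>f s\<bar> powr r) \<partial>I01) + ennreal (1/q) \<le> ennreal (1/r) * 1 + ennreal (1/q) * 1"
        using J by (intro add_mono mult_left_mono) auto
      also have "\<dots> = 1" using rq r1' q1 by (simp flip: ennreal_plus)
      finally show ?thesis using 1 by simp
    qed
  qed
  thus "(\<integral>\<^sup>+ s. ennreal (exp(-l* s) * \<bar>f s\<bar>) \<partial>I01) \<le> ennreal (Kc p l)"
    and "(\<integral>\<^sup>+ s. ennreal \<bar>f s\<bar> \<partial>I01) \<le> 1" by auto
qed



lemma abs_int_le:
  fixes g :: "real \<Rightarrow> real"
  assumes "(\<integral>\<^sup>+ s. ennreal \<bar>g s\<bar> \<partial>M) \<le> ennreal B" "B \<ge> 0"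
  shows "\<bar>integral\<^sup>L M g\<bar> \<le> B"
proof (cases "integrable M g")
  case True
  have "ennreal (norm (integral\<^sup>L M g)) \<le> (\<integral>\<^sup>+ s. ennreal (norm (g s)) \<partial>M)"
    by (rule integral_norm_bound_ennreal[OF True])
  also have "\<dots> \<le> ennreal B" using assms(1) by simp
  finally show ?thesis using assms(2) by (simp add: ennreal_le_iff)
next
  case False
  thus ?thesis using assms(2) by (simp add: not_integrable_integral_eq)
qed

lemma kernel_bound:
  fixes g f :: "real \<Rightarrow> real"
  assumes f: "f \<in> borel_measurable I01" and K: "K \<ge> 0" "c \<ge> 0"
    and nn: "(\<integral>\<^sup>+ s. ennreal (exp(-l* s) * \<bar>f s\<bar>) \<partial>I01) \<le> ennreal K"
    and g: "\<And>s. \<bar>g s\<bar> \<le> c * (exp(-l* s) * \<bar>f s\<bar>)"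
  shows "\<bar>integral\<^sup>L I01 g\<bar> \<le> c * K"
proof (rule abs_int_le)
  note fm[measurable] = f
  have "(\<integral>\<^sup>+ s. ennreal \<bar>g s\<bar> \<partial>I01) \<le> (\<integral>\<^sup>+ s. ennreal c * ennreal (exp(-l* s) * \<bar>f s\<bar>) \<partial>I01)"
    using g K by (intro nn_integral_mono) (simp flip: ennreal_mult add: ennreal_leI)
  also have "\<dots> = ennreal c * (\<integral>\<^sup>+ s. ennreal (exp(-l* s) * \<bar>f s\<bar>) \<partial>I01)"
    by (intro nn_integral_cmult) measurable
  also have "\<dots> \<le> ennreal c * ennreal K" using nn by (intro mult_left_mono) auto
  also have "\<dots> = ennreal (c * K)" using K by (simp add: ennreal_mult)
  finally show "(\<integral>\<^sup>+ s. ennreal \<bar>g s\<bar> \<partial>I01) \<le> ennreal (c * K)" .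
qed (use K in auto)

lemma T_bound:
  assumes f: "f \<in> borel_measurable I01" and K: "K \<ge> 0"
    and nn: "(\<integral>\<^sup>+ s. ennreal (exp(-l* s) * \<bar>f s\<bar>) \<partial>I01) \<le> ennreal K"
  shows "\<bar>T_op l f t\<bar> \<le> exp (l*t) * K" and "\<bar>S_op l f t\<bar> \<le> exp (l*t) * K"
proof -
  have e: "exp (l*(t-s)) = exp (l*t) * exp(-l* s)" for s
    by (simp add: right_diff_distrib exp_diff exp_minus field_simps)
  show "\<bar>T_op l f t\<bar> \<le> exp (l*t) * K" unfolding T_op_def
    by (rule kernel_bound[OF f K _ nn]) (auto simp: e abs_mult indicator_def)
  show "\<bar>S_op l f t\<bar> \<le> exp (l*t) * K" unfolding S_op_def
    by (rule kernel_bound[OF f K _ nn]) (auto simp: e abs_mult)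
qed

lemma diff_bound:
  assumes f: "f \<in> borel_measurable I01" and l: "l \<ge> 0"
    and nn: "(\<integral>\<^sup>+ s. ennreal \<bar>f s\<bar> \<partial>I01) \<le> 1"
  shows "\<bar>S_op l f t - T_op l f t\<bar> \<le> 1"
proof -
  note fm[measurable] = f
  have "(\<integral>\<^sup>+ x. ennreal (norm (f x)) \<partial>I01) < \<infinity>"
    using order.strict_trans1[OF nn, of top] by simp
  hence fi: "integrable I01 f"
    by (intro integrableI_bounded) measurable
  have i1: "integrable I01 (\<lambda>s. exp (l*(t-s)) * f s)"
  proof (rule Bochner_Integration.integrable_bound[OF integrable_mult_right[OF fi, of "exp (l*t)"]])
    show "AE x in I01. norm (exp (l*(t-x)) * f x) \<le> norm (exp (l*t) * f x)"
      using l by (intro AE_I2) (auto simp: abs_mult intro!: mult_right_mono mult_left_mono)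
  qed measurable
  have i2: "integrable I01 (\<lambda>s. indicator {..<t} s * exp (l*(t-s)) * f s)"
  proof (rule Bochner_Integration.integrable_bound[OF integrable_mult_right[OF fi, of "exp (l*t)"]])
    show "AE x in I01. norm (indicator {..<t} x * exp (l*(t-x)) * f x) \<le> norm (exp (l*t) * f x)"
      using l by (intro AE_I2) (auto simp: abs_mult indicator_def intro!: mult_right_mono mult_left_mono)
  qed measurable
  have "S_op l f t - T_op l f t = integral\<^sup>L I01 (\<lambda>s. exp (l*(t-s)) * f s - indicator {..<t} s * exp (l*(t-s)) * f s)"
    unfolding S_op_def T_op_def by (rule Bochner_Integration.integral_diff[OF i1 i2, symmetric])
  also have "\<bar>\<dots>\<bar> \<le> 1"
  proof (rule abs_int_le)
    have "(\<integral>\<^sup>+ s. ennreal \<bar>exp (l*(t-s)) * f s - indicator {..<t} s * exp (l*(t-s)) * f s\<bar> \<partial>I01)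
        \<le> (\<integral>\<^sup>+ s. ennreal \<bar>f s\<bar> \<partial>I01)"
    proof (intro nn_integral_mono ennreal_leI)
      fix s
      show "\<bar>exp (l*(t-s)) * f s - indicator {..<t} s * exp (l*(t-s)) * f s\<bar> \<le> \<bar>f s\<bar>"
      proof (cases "s < t")
        case False
        hence "exp (l*(t-s)) \<le> 1" using l by (simp add: mult_nonneg_nonpos)
        thus ?thesis using False by (auto simp: indicator_def abs_mult intro!: mult_left_le_one_le)
      qed (simp add: indicator_def)
    qed
    thus "(\<integral>\<^sup>+ s. ennreal \<bar>exp (l*(t-s)) * f s - indicator {..<t} s * exp (l*(t-s)) * f s\<bar> \<partial>I01) \<le> ennreal 1"
      using nn by simp
  qed simp
  finally show ?thesis .
qed

lemma fst_I01[measurable]: "(\<lambda>x::real\<times>real. fst x) \<in> borel_measurable (I01 \<Otimes>\<^sub>M I01)"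
  by (rule measurable_compose[OF measurable_fst id_meas_I01])

lemma snd_I01[measurable]: "(\<lambda>x::real\<times>real. snd x) \<in> borel_measurable (I01 \<Otimes>\<^sub>M I01)"
  by (rule measurable_compose[OF measurable_snd id_meas_I01])

lemma pred_lt_I01[measurable]: "Measurable.pred (I01 \<Otimes>\<^sub>M I01) (\<lambda>x::real\<times>real. snd x \<in> {..<fst x})"
  by (simp only: lessThan_iff) measurable

lemma T_meas:
  assumes f: "f \<in> borel_measurable I01"
  shows "T_op l f \<in> borel_measurable I01"
proof -
  interpret finite_measure I01 by (rule finite_measure_lebesgue_on) auto
  note [measurable] = f
  have [measurable]: "(\<lambda>x::real\<times>real. f (snd x)) \<in> borel_measurable (I01 \<Otimes>\<^sub>M I01)"
    by (rule measurable_compose[OF measurable_snd f])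
  show ?thesis unfolding T_op_def
    by (rule borel_measurable_lebesgue_integral) measurable
qed



definition Ec :: "ereal \<Rightarrow> real \<Rightarrow> real" where
  "Ec p l = (if p = \<infinity> then exp l else (let r = real_of_ereal p in (exp (r*l)/(r*l)) powr (1/r)))"

lemma Lp_fin: "p = ereal r \<Longrightarrow> Lp_norm p g = (let J = (\<integral>\<^sup>+ x. ennreal (\<bar>g x\<bar> powr r) \<partial>I01)
            in if J = \<infinity> then \<infinity> else ereal (enn2real J powr (1 / r)))"
  by (simp add: Lp_norm_def Let_def)

lemma Lp_inf: "Lp_norm \<infinity> g = esssup I01 (\<lambda>x. ereal \<bar>g x\<bar>)"
  by (simp add: Lp_norm_def)

lemma Lp_exp_bound:
  assumes p: "1 \<le> p" and l: "l > 0" and K: "K \<ge> 0"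
    and g: "\<And>t. t \<in> {0<..<1} \<Longrightarrow> \<bar>g t\<bar> \<le> exp (l*t) * K"
    and gm: "p = \<infinity> \<Longrightarrow> g \<in> borel_measurable I01"
  shows "Lp_norm p g \<le> ereal (K * Ec p l)"
proof (cases "p = \<infinity>")
  case True
  note [measurable] = gm[OF True]
  have "esssup I01 (\<lambda>x. ereal \<bar>g x\<bar>) \<le> ereal (K * exp l)"
  proof (rule esssup_I)
    show "AE x in I01. ereal \<bar>g x\<bar> \<le> ereal (K * exp l)"
    proof (rule AE_I2)
      fix x assume x: "x \<in> space I01"
      have "\<bar>g x\<bar> \<le> exp (l*x) * K" using g x by simp
      also have "\<dots> \<le> exp l * K" using x l K by (intro mult_right_mono) auto
      finally show "ereal \<bar>g x\<bar> \<le> ereal (K * exp l)" by (simp add: mult.commute)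
    qed
  qed measurable
  thus ?thesis using True by (simp add: Lp_inf Ec_def)
next
  case False
  then obtain r where pr: "p = ereal r" using p by (cases p) auto
  have r1: "r \<ge> 1" using p pr by simp
  define J where "J = (\<integral>\<^sup>+ x. ennreal (\<bar>g x\<bar> powr r) \<partial>I01)"
  define X where "X = (exp (r*l) - 1)/(r*l)"
  have X0: "X \<ge> 0" unfolding X_def using r1 l by (intro divide_nonneg_pos) auto
  have "J \<le> (\<integral>\<^sup>+ x. ennreal (K powr r) * ennreal (exp ((r*l)*x)) \<partial>I01)"
    unfolding J_def
  proof (intro nn_integral_mono)
    fix x assume x: "x \<in> space I01"
    have "\<bar>g x\<bar> powr r \<le> (exp (l*x) * K) powr r"
      using g x r1 by (intro powr_mono2) auto
    also have "\<dots> = exp (l*x) powr r * K powr r"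
      using K by (simp add: powr_mult)
    also have "exp (l*x) powr r = exp ((r*l)*x)" by (simp add: powr_def mult_ac)
    finally show "ennreal (\<bar>g x\<bar> powr r) \<le> ennreal (K powr r) * ennreal (exp ((r*l)*x))"
      by (simp add: ennreal_mult[symmetric] ennreal_leI mult.commute)
  qed
  also have "\<dots> = ennreal (K powr r) * ennreal X"
    using r1 l unfolding X_def by (subst nn_integral_cmult) (measurable, subst nn_exp01, auto)
  also have "\<dots> = ennreal (K powr r * X)" using X0 by (simp add: ennreal_mult)
  finally have JB: "J \<le> ennreal (K powr r * X)" .
  hence Jfin: "J \<noteq> \<infinity>" by (auto simp: top_unique)
  have "enn2real J \<le> K powr r * X"
    using enn2real_mono[OF JB] X0 by simp
  hence "enn2real J powr (1/r) \<le> (K powr r * X) powr (1/r)"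
    using r1 by (intro powr_mono2) auto
  also have "\<dots> = K * X powr (1/r)"
    using r1 K X0 by (simp add: powr_mult powr_powr)
  also have "\<dots> \<le> K * Ec p l"
  proof (intro mult_left_mono K)
    have "X \<le> exp (r*l)/(r*l)" unfolding X_def using r1 l by (intro divide_right_mono) auto
    hence "X powr (1/r) \<le> (exp (r*l)/(r*l)) powr (1/r)" using X0 r1 by (intro powr_mono2) auto
    thus "X powr (1/r) \<le> Ec p l" using pr False by (simp add: Ec_def)
  qed
  finally show ?thesis using Jfin unfolding Lp_fin[OF pr] J_def[symmetric] by (simp add: Let_def)
qed

lemma Lp_one_bound:
  assumes p: "1 \<le> p"
    and g: "\<And>t. t \<in> {0<..<1} \<Longrightarrow> \<bar>g t\<bar> \<le> 1"
    and gm: "p = \<infinity> \<Longrightarrow> g \<in> borel_measurable I01"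
  shows "Lp_norm p g \<le> 1"
proof (cases "p = \<infinity>")
  case True
  note [measurable] = gm[OF True]
  have "esssup I01 (\<lambda>x. ereal \<bar>g x\<bar>) \<le> 1"
    by (rule esssup_I) (use g in \<open>auto intro!: AE_I2\<close>)
  thus ?thesis using True by (simp add: Lp_inf)
next
  case False
  then obtain r where pr: "p = ereal r" using p by (cases p) auto
  have r1: "r \<ge> 1" using p pr by simp
  define J where "J = (\<integral>\<^sup>+ x. ennreal (\<bar>g x\<bar> powr r) \<partial>I01)"
  have "J \<le> (\<integral>\<^sup>+ x. 1 \<partial>I01)" unfolding J_def
  proof (intro nn_integral_mono)
    fix x assume x: "x \<in> space I01"
    have "\<bar>g x\<bar> powr r \<le> 1 powr r" using g x r1 by (intro powr_mono2) auto
    thus "ennreal (\<bar>g x\<bar> powr r) \<le> 1" by (simp add: ennreal_le_1)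
  qed
  hence JB: "J \<le> 1" using nn_one by simp
  hence Jfin: "J \<noteq> \<infinity>" by (auto simp: top_unique)
  have "enn2real J \<le> 1" using enn2real_mono[OF JB] by simp
  hence "enn2real J powr (1/r) \<le> 1 powr (1/r)" using r1 by (intro powr_mono2) auto
  thus ?thesis using Jfin unfolding Lp_fin[OF pr] J_def[symmetric] by (simp add: Let_def)
qed

lemma Lp_nonneg:
  assumes p: "1 \<le> p"
  shows "0 \<le> Lp_norm p g"
proof (cases "p = \<infinity>")
  case True
  show ?thesis
  proof (rule ccontr)
    assume "\<not> 0 \<le> Lp_norm p g"
    hence neg: "esssup I01 (\<lambda>x. ereal \<bar>g x\<bar>) < 0" using True by (simp add: Lp_inf)
    have "AE x in I01. False"
      using esssup_AE[where M=I01 and f="\<lambda>x. ereal \<bar>g x\<bar>"]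
    proof (rule eventually_mono)
      fix x assume "ereal \<bar>g x\<bar> \<le> esssup I01 (\<lambda>x. ereal \<bar>g x\<bar>)"
      hence "ereal \<bar>g x\<bar> < 0" using neg by (rule le_less_trans)
      thus False by simp
    qed
    hence "ae_filter I01 = bot" by (metis trivial_limit_def)
    thus False using emeasure_I01 ae_filter_eq_bot_iff[of I01] by simp
  qed
next
  case False
  then obtain r where pr: "p = ereal r" using p by (cases p) auto
  show ?thesis unfolding Lp_fin[OF pr] by (simp add: Let_def)
qed

lemma op_UB:
  assumes "\<And>f. f \<in> borel_measurable I01 \<Longrightarrow> Lp_norm p f \<le> 1 \<Longrightarrow> Lp_norm p (A f) \<le> B"
  shows "op_norm p A \<le> B"
  unfolding op_norm_def using assms by (auto intro!: Sup_least)

lemma op_LB: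
  assumes "f \<in> borel_measurable I01" "Lp_norm p f \<le> 1"
  shows "Lp_norm p (A f) \<le> op_norm p A"
  unfolding op_norm_def using assms by (auto intro!: Sup_upper)



lemma int_exp_0t:
  assumes "0 < t" "t \<le> 1" "m \<noteq> 0"
  shows "integral\<^sup>L I01 (\<lambda>s. indicator {0<..<t} s * exp (m * s)) = (exp (m*t) - 1)/m"
proof -
  have "integral\<^sup>L I01 (\<lambda>s. indicator {0<..<t} s * exp (m * s))
      = enn2real (\<integral>\<^sup>+ s. ennreal (indicator {0<..<t} s * exp (m * s)) \<partial>I01)"
    by (rule integral_eq_nn_integral) (auto intro!: AE_I2)
  also have "\<dots> = enn2real (ennreal ((exp (m*t) - exp (m*0))/m))"
    using assms by (subst nn_exp) auto
  also have "\<dots> = (exp (m*t) - 1)/m"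
  proof -
    have "0 \<le> (exp (m*t) - 1)/m"
    proof (cases "m > 0")
      case True
      hence "1 \<le> exp (m*t)" using assms by simp
      thus ?thesis using True by (intro divide_nonneg_pos) auto
    next
      case False
      hence "m < 0" using assms by simp
      hence "m * t < 0" using assms by (simp add: mult_neg_pos)
      hence "exp (m*t) \<le> 1" by simp
      thus ?thesis using \<open>m < 0\<close> by (intro divide_nonpos_neg) auto
    qed
    thus ?thesis by simp
  qed
  finally show ?thesis .
qed

lemma T_test:
  assumes "0 < t" "t \<le> 1" "l + \<nu> > 0"
  shows "T_op l (\<lambda>s. c * exp (-\<nu> * s)) t = exp (l*t) * c * ((exp (-(l+\<nu>)*t) - 1)/(-(l+\<nu>)))"
proof -
  have "T_op l (\<lambda>s. c * exp (-\<nu> * s)) t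
      = integral\<^sup>L I01 (\<lambda>s. (exp (l*t) * c) * (indicator {0<..<t} s * exp ((-(l+\<nu>)) * s)))"
    unfolding T_op_def
  proof (intro Bochner_Integration.integral_cong refl)
    fix s assume s: "s \<in> space I01"
    have e: "exp (l * (t - s)) * (c * exp (- \<nu> * s)) = exp (l*t) * c * exp ((-(l+\<nu>)) * s)"
      by (simp add: exp_add[symmetric] algebra_simps)
    show "indicator {..<t} s * exp (l * (t - s)) * (c * exp (- \<nu> * s))
        = (exp (l*t) * c) * (indicator {0<..<t} s * exp ((-(l+\<nu>)) * s))"
      using s e by (auto simp: indicator_def)
  qed
  also have "\<dots> = exp (l*t) * c * ((exp (-(l+\<nu>)*t) - 1)/(-(l+\<nu>)))"
    using assms by (simp only: integral_mult_right_zero int_exp_0t)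
  finally show ?thesis .
qed

lemma S_test:
  assumes "l + \<nu> > 0"
  shows "S_op l (\<lambda>s. c * exp (-\<nu> * s)) t = exp (l*t) * c * ((exp (-(l+\<nu>)) - 1)/(-(l+\<nu>)))"
proof -
  have "S_op l (\<lambda>s. c * exp (-\<nu> * s)) t
      = integral\<^sup>L I01 (\<lambda>s. (exp (l*t) * c) * (indicator {0<..<1} s * exp ((-(l+\<nu>)) * s)))"
    unfolding S_op_def
  proof (intro Bochner_Integration.integral_cong refl)
    fix s assume s: "s \<in> space I01"
    have e: "exp (l * (t - s)) * (c * exp (- \<nu> * s)) = exp (l*t) * c * exp ((-(l+\<nu>)) * s)"
      by (simp add: exp_add[symmetric] algebra_simps)
    show "exp (l * (t - s)) * (c * exp (- \<nu> * s))
        = (exp (l*t) * c) * (indicator {0<..<1} s * exp ((-(l+\<nu>)) * s))"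
      using s e by (auto simp: indicator_def)
  qed
  also have "\<dots> = exp (l*t) * c * ((exp (-(l+\<nu>)) - 1)/(-(l+\<nu>)))"
    using assms int_exp_0t[of 1 "-(l+\<nu>)"] by (simp only: integral_mult_right_zero) simp
  finally show ?thesis .
qed

lemma S_form: "S_op l f t = exp (l*t) * integral\<^sup>L I01 (\<lambda>s. exp (-l* s) * f s)"
proof -
  have "S_op l f t = integral\<^sup>L I01 (\<lambda>s. exp (l*t) * (exp (-l* s) * f s))"
    unfolding S_op_def
    by (intro Bochner_Integration.integral_cong refl) (simp add: exp_add[symmetric] algebra_simps)
  thus ?thesis by simp
qed

lemma S_meas: "S_op l f \<in> borel_measurable I01"
proof -
  have "S_op l f = (\<lambda>t. exp (l*t) * integral\<^sup>L I01 (\<lambda>s. exp (-l* s) * f s))"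
    using S_form by auto
  thus ?thesis by simp
qed

lemma Lp_from_J:
  assumes pr: "p = ereal r" and r1: "r \<ge> 1" and JB: "(\<integral>\<^sup>+ x. ennreal (\<bar>g x\<bar> powr r) \<partial>I01) \<le> 1"
  shows "Lp_norm p g \<le> 1"
proof -
  define J where "J = (\<integral>\<^sup>+ x. ennreal (\<bar>g x\<bar> powr r) \<partial>I01)"
  have JB: "J \<le> 1" using JB J_def by simp
  hence Jfin: "J \<noteq> \<infinity>" by (auto simp: top_unique)
  have "enn2real J \<le> 1" using enn2real_mono[OF JB] by simp
  hence "enn2real J powr (1/r) \<le> 1 powr (1/r)" using r1 by (intro powr_mono2) auto
  thus ?thesis using Jfin unfolding Lp_fin[OF pr] J_def[symmetric] by (simp add: Let_def)
qed

lemma test_norm_fin: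
  assumes pr: "p = ereal r" and r1: "r \<ge> 1" and nu: "\<nu> > 0" and c: "c \<ge> 0" and cr: "c powr r \<le> r * \<nu>"
  shows "Lp_norm p (\<lambda>s. c * exp (-\<nu> * s)) \<le> 1"
proof (rule Lp_from_J[OF pr r1])
  have "(\<integral>\<^sup>+ x. ennreal (\<bar>c * exp (-\<nu> * x)\<bar> powr r) \<partial>I01)
      = (\<integral>\<^sup>+ x. ennreal (c powr r) * ennreal (exp ((-(r*\<nu>)) * x)) \<partial>I01)"
  proof (intro nn_integral_cong)
    fix x
    have "\<bar>c * exp (-\<nu> * x)\<bar> powr r = c powr r * exp (-\<nu> * x) powr r"
      using c by (simp add: powr_mult abs_mult)
    also have "exp (-\<nu> * x) powr r = exp ((-(r*\<nu>)) * x)" by (simp add: powr_def mult_ac)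
    finally show "ennreal (\<bar>c * exp (-\<nu> * x)\<bar> powr r) = ennreal (c powr r) * ennreal (exp ((-(r*\<nu>)) * x))"
      by (simp add: ennreal_mult)
  qed
  also have "\<dots> = ennreal (c powr r) * ennreal ((exp (-(r*\<nu>)) - 1)/(-(r*\<nu>)))"
    using r1 nu by (subst nn_integral_cmult) (measurable, subst nn_exp01, auto)
  also have "\<dots> = ennreal (c powr r * ((exp (-(r*\<nu>)) - 1)/(-(r*\<nu>))))"
  proof -
    have "0 \<le> (exp (-(r*\<nu>)) - 1)/(-(r*\<nu>))" using r1 nu by (intro divide_nonpos_neg) auto
    thus ?thesis by (intro ennreal_mult[symmetric]) auto
  qed
  also have "\<dots> \<le> 1"
  proof -
    have "0 \<le> (exp (-(r*\<nu>)) - 1)/(-(r*\<nu>))" using r1 nu by (intro divide_nonpos_neg) auto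
    hence "c powr r * ((exp (-(r*\<nu>)) - 1)/(-(r*\<nu>))) \<le> (r*\<nu>) * ((exp (-(r*\<nu>)) - 1)/(-(r*\<nu>)))"
      using cr by (intro mult_right_mono) auto
    also have "\<dots> = 1 - exp (-(r*\<nu>))" using r1 nu by (simp add: field_simps)
    also have "\<dots> \<le> 1" by simp
    finally show ?thesis by (simp add: ennreal_le_1)
  qed
  finally show "(\<integral>\<^sup>+ x. ennreal (\<bar>c * exp (-\<nu> * x)\<bar> powr r) \<partial>I01) \<le> 1" .
qed

lemma LB_fin:
  assumes pr: "p = ereal r" and r1: "r \<ge> 1" and l: "l > 0" and a: "a \<ge> 0"
    and g: "\<And>t. 1/2 < t \<Longrightarrow> t < 1 \<Longrightarrow> a * exp (l*t) \<le> \<bar>g t\<bar>"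
  shows "ereal (a * ((exp (r*l) - exp (r*l/2))/(r*l)) powr (1/r)) \<le> Lp_norm p g"
proof -
  define J where "J = (\<integral>\<^sup>+ x. ennreal (\<bar>g x\<bar> powr r) \<partial>I01)"
  define Y where "Y = (exp (r*l) - exp (r*l/2))/(r*l)"
  have Y0: "Y \<ge> 0" unfolding Y_def using r1 l by (intro divide_nonneg_pos) auto
  have "(\<integral>\<^sup>+ x. ennreal (a powr r) * ennreal (indicator {1/2<..<1} x * exp ((r*l)*x)) \<partial>I01) \<le> J"
    unfolding J_def
  proof (intro nn_integral_mono)
    fix x assume x: "x \<in> space I01"
    show "ennreal (a powr r) * ennreal (indicator {1/2<..<1} x * exp ((r*l)*x)) \<le> ennreal (\<bar>g x\<bar> powr r)"
    proof (cases "1/2 < x \<and> x < 1")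
      case True
      have e1: "(a * exp (l*x)) powr r = a powr r * exp (l*x) powr r" using a by (simp add: powr_mult)
      have e2: "exp (l*x) powr r = exp ((r*l)*x)" by (simp add: powr_def mult_ac)
      have "a powr r * exp ((r*l)*x) = (a * exp (l*x)) powr r" using e1 e2 by simp
      also have "\<dots> \<le> \<bar>g x\<bar> powr r" using g True a r1 by (intro powr_mono2) auto
      finally show ?thesis using True a by (simp add: ennreal_mult[symmetric] ennreal_leI)
    qed auto
  qed
  moreover have "(\<integral>\<^sup>+ x. ennreal (a powr r) * ennreal (indicator {1/2<..<1} x * exp ((r*l)*x)) \<partial>I01)
      = ennreal (a powr r * Y)"
  proof -
    have "(\<integral>\<^sup>+ x. ennreal (a powr r) * ennreal (indicator {1/2<..<1} x * exp ((r*l)*x)) \<partial>I01)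
        = ennreal (a powr r) * (\<integral>\<^sup>+ x. ennreal (indicator {1/2<..<1} x * exp ((r*l)*x)) \<partial>I01)"
      by (rule nn_integral_cmult) measurable
    also have "(\<integral>\<^sup>+ x. ennreal (indicator {1/2<..<1} x * exp ((r*l)*x)) \<partial>I01) = ennreal Y"
      unfolding Y_def using r1 l by (subst nn_exp) (auto simp: mult_ac)
    finally show ?thesis using Y0 by (simp add: ennreal_mult)
  qed
  ultimately have JB: "ennreal (a powr r * Y) \<le> J" by simp
  show ?thesis
  proof (cases "J = \<infinity>")
    case True
    thus ?thesis unfolding Lp_fin[OF pr] J_def[symmetric] by (simp add: Let_def)
  next
    case False
    have "a powr r * Y \<le> enn2real J"
      using enn2real_mono[OF JB] False Y0 by (simp add: top.not_eq_extremum)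
    hence "(a powr r * Y) powr (1/r) \<le> enn2real J powr (1/r)"
      using r1 Y0 by (intro powr_mono2) auto
    moreover have "(a powr r * Y) powr (1/r) = a * Y powr (1/r)"
      using r1 a Y0 by (simp add: powr_mult powr_powr)
    ultimately show ?thesis using False unfolding Lp_fin[OF pr] J_def[symmetric] Y_def[symmetric]
      by (simp add: Let_def)
  qed
qed

lemma LB_inf:
  assumes gm: "g \<in> borel_measurable I01" and b: "1/2 \<le> b" "b < 1" and l: "l > 0" and a: "a \<ge> 0"
    and g: "\<And>t. 1/2 < t \<Longrightarrow> t < 1 \<Longrightarrow> a * exp (l*t) \<le> \<bar>g t\<bar>"
  shows "ereal (a * exp (l*b)) \<le> Lp_norm \<infinity> g"
proof (rule ccontr)
  assume "\<not> ereal (a * exp (l*b)) \<le> Lp_norm \<infinity> g"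
  hence lt: "esssup I01 (\<lambda>x. ereal \<bar>g x\<bar>) < ereal (a * exp (l*b))" by (simp add: Lp_inf)
  have "AE x in I01. x \<notin> {b<..<1}"
    using esssup_AE[where M=I01 and f="\<lambda>x. ereal \<bar>g x\<bar>"]
  proof (rule eventually_mono)
    fix x assume "ereal \<bar>g x\<bar> \<le> esssup I01 (\<lambda>x. ereal \<bar>g x\<bar>)"
    hence "ereal \<bar>g x\<bar> < ereal (a * exp (l*b))" using lt by (rule le_less_trans)
    hence "\<bar>g x\<bar> < a * exp (l*b)" by simp
    show "x \<notin> {b<..<1}"
    proof
      assume x: "x \<in> {b<..<1}"
      have "a * exp (l*b) \<le> a * exp (l*x)" using x l a by (intro mult_left_mono) auto
      also have "\<dots> \<le> \<bar>g x\<bar>" using g x b by auto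
      finally show False using \<open>\<bar>g x\<bar> < a * exp (l*b)\<close> by simp
    qed
  qed
  moreover have "{b<..<1} \<in> sets I01"
    using b by (subst sets_restrict_space_iff) auto
  ultimately have "{b<..<1} \<in> null_sets I01"
    by (subst AE_iff_null_sets) auto
  moreover have "emeasure I01 {b<..<1} = ennreal (1 - b)"
    using b by (subst emeasure_restrict_space) (auto simp: Int_absorb2)
  ultimately have "ennreal (1 - b) = 0" by (simp add: null_sets_def)
  thus False using b by simp
qed



lemma Kc_pos: "1 \<le> p \<Longrightarrow> l > 0 \<Longrightarrow> Kc p l > 0"
proof -
  assume p: "1 \<le> p" and l: "l > 0"
  show ?thesis
  proof (cases "p = \<infinity> \<or> p = 1")
    case True thus ?thesis using l by (auto simp: Kc_def)
  next
    case False
    then obtain r where pr: "p = ereal r" using p by (cases p) auto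
    have r1: "r > 1" using p pr False by auto
    have "r/(r-1) > 0" using r1 by simp
    thus ?thesis using False pr l r1 by (simp add: Kc_def Let_def)
  qed
qed

lemma upper_all:
  assumes p: "1 \<le> p" and l: "l > 0"
  shows "op_norm p (T_op l) \<le> ereal (Kc p l * Ec p l)"
    and "op_norm p (S_op l) \<le> ereal (Kc p l * Ec p l)"
    and "op_norm p (\<lambda>f t. S_op l f t - T_op l f t) \<le> 1"
proof -
  have K0: "Kc p l \<ge> 0" using Kc_pos[OF p l] by simp
  show "op_norm p (T_op l) \<le> ereal (Kc p l * Ec p l)"
  proof (rule op_UB)
    fix f assume f: "f \<in> borel_measurable I01" "Lp_norm p f \<le> 1"
    show "Lp_norm p (T_op l f) \<le> ereal (Kc p l * Ec p l)"
      by (rule Lp_exp_bound[OF p l K0 T_bound(1)[OF f(1) K0 holder(1)[OF p f l]] T_meas[OF f(1)]])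
  qed
  show "op_norm p (S_op l) \<le> ereal (Kc p l * Ec p l)"
  proof (rule op_UB)
    fix f assume f: "f \<in> borel_measurable I01" "Lp_norm p f \<le> 1"
    show "Lp_norm p (S_op l f) \<le> ereal (Kc p l * Ec p l)"
      by (rule Lp_exp_bound[OF p l K0 T_bound(2)[OF f(1) K0 holder(1)[OF p f l]] S_meas])
  qed
  show "op_norm p (\<lambda>f t. S_op l f t - T_op l f t) \<le> 1"
  proof (rule op_UB)
    fix f assume f: "f \<in> borel_measurable I01" "Lp_norm p f \<le> 1"
    have m: "(\<lambda>t. S_op l f t - T_op l f t) \<in> borel_measurable I01"
      using S_meas T_meas[OF f(1)] by (rule borel_measurable_diff)
    show "Lp_norm p (\<lambda>t. S_op l f t - T_op l f t) \<le> 1"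
      by (rule Lp_one_bound[OF p diff_bound[OF f(1) _ holder(2)[OF p f l]] m]) (use l in auto)
  qed
qed

lemma KE:
  assumes p: "1 \<le> p" and l: "l > 0"
  shows "Kc p l * Ec p l = C_const p * exp l / l"
proof (cases "p = \<infinity>")
  case True thus ?thesis by (simp add: Kc_def Ec_def C_const_def)
next
  case False
  then obtain r where pr: "p = ereal r" using p by (cases p) auto
  have r1: "r \<ge> 1" using p pr by simp
  show ?thesis
  proof (cases "r = 1")
    case True
    have "(exp l / l) powr 1 = exp l / l" using l by simp
    thus ?thesis using True pr by (simp add: Kc_def Ec_def C_const_def one_ereal_def)
  next
    case False
    hence r1': "r > 1" using r1 by simp
    define q where "q = r/(r-1)"
    have q1: "q > 1" using r1' by (simp add: q_def less_divide_eq)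
    have rq: "1/r + 1/q = 1" using r1' by (simp add: q_def field_simps)
    have pn: "p \<noteq> \<infinity>" "p \<noteq> 1" using pr r1' by auto
    have K: "Kc p l = (q*l) powr (-1/q)" unfolding Kc_def q_def Let_def using pn pr
      by (simp only: if_False real_of_ereal.simps)
    have E: "Ec p l = (exp (r*l)/(r*l)) powr (1/r)" unfolding Ec_def Let_def using pn pr
      by (simp only: if_False real_of_ereal.simps)
    have C: "C_const p = 1 / (r powr (1/r) * q powr (1/q))" unfolding C_const_def q_def Let_def using pn pr
      by (simp only: if_False real_of_ereal.simps simp_thms)
    have e1: "(exp (r*l)/(r*l)) powr (1/r) = exp l / (r powr (1/r) * l powr (1/r))"
    proof -
      have "(exp (r*l)/(r*l)) powr (1/r) = exp (r*l) powr (1/r) / (r*l) powr (1/r)"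
        using r1 l by (simp add: powr_divide)
      also have "exp (r*l) powr (1/r) = exp l" using r1 by (simp add: powr_def)
      also have "(r*l) powr (1/r) = r powr (1/r) * l powr (1/r)" using r1 l by (simp add: powr_mult)
      finally show ?thesis .
    qed
    have e2: "(q*l) powr (-1/q) = 1 / (q powr (1/q) * l powr (1/q))"
      using q1 l by (simp add: powr_minus_divide powr_mult)
    have e3: "l powr (1/r) * l powr (1/q) = l"
      using l rq by (simp add: powr_add[symmetric])
    have "Kc p l * Ec p l = exp l / (r powr (1/r) * q powr (1/q) * (l powr (1/r) * l powr (1/q)))"
      unfolding K E e1 e2 by (simp add: field_simps)
    also have "\<dots> = C_const p * exp l / l" unfolding e3 C by simp
    finally show ?thesis .
  qed
qed

lemma neg_frac: "(x - 1)/(-m) = (1 - x)/(m::real)"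
  by (metis minus_diff_eq minus_divide_divide)

lemma test_lower:
  assumes l: "l > 0" and nu: "\<nu> \<ge> 0" and c: "c \<ge> 0" and t: "1/2 < t" "t < 1"
  defines "a \<equiv> c * (1 - exp (-(l+\<nu>)/2))/(l+\<nu>)"
  shows "a * exp (l*t) \<le> \<bar>T_op l (\<lambda>s. c * exp (-\<nu> * s)) t\<bar>"
    and "a * exp (l*t) \<le> \<bar>S_op l (\<lambda>s. c * exp (-\<nu> * s)) t\<bar>"
proof -
  define \<mu> where "\<mu> = l + \<nu>"
  have mu: "\<mu> > 0" using l nu by (simp add: \<mu>_def)
  have T0: "T_op l (\<lambda>s. c * exp (-\<nu> * s)) t = exp (l*t) * c * ((exp (-(l+\<nu>)*t) - 1)/(-(l+\<nu>)))"
    by (rule T_test) (use t l nu in auto)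
  have T: "T_op l (\<lambda>s. c * exp (-\<nu> * s)) t = exp (l*t) * c * ((1 - exp (-\<mu>*t))/\<mu>)"
    unfolding T0 neg_frac \<mu>_def ..
  have S0: "S_op l (\<lambda>s. c * exp (-\<nu> * s)) t = exp (l*t) * c * ((exp (-(l+\<nu>)) - 1)/(-(l+\<nu>)))"
    by (rule S_test) (use l nu in auto)
  have S: "S_op l (\<lambda>s. c * exp (-\<nu> * s)) t = exp (l*t) * c * ((1 - exp (-\<mu>))/\<mu>)"
    unfolding S0 neg_frac \<mu>_def ..
  have a: "a = c * ((1 - exp (-\<mu>/2))/\<mu>)" unfolding a_def \<mu>_def by simp
  have m1: "exp (-\<mu>*t) \<le> exp (-\<mu>/2)" using mu t by simp
  have m2: "exp (-\<mu>) \<le> exp (-\<mu>/2)" using mu by simp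
  have h1: "(1 - exp (-\<mu>/2))/\<mu> \<le> (1 - exp (-\<mu>*t))/\<mu>" using m1 mu by (intro divide_right_mono) auto
  have h2: "(1 - exp (-\<mu>/2))/\<mu> \<le> (1 - exp (-\<mu>))/\<mu>" using m2 mu by (intro divide_right_mono) auto
  have p0: "0 \<le> (1 - exp (-\<mu>/2))/\<mu>" using mu by (intro divide_nonneg_pos) auto
  have "a * exp (l*t) = exp (l*t) * c * ((1 - exp (-\<mu>/2))/\<mu>)" unfolding a by simp
  also have "\<dots> \<le> exp (l*t) * c * ((1 - exp (-\<mu>*t))/\<mu>)" using h1 c by (intro mult_left_mono) auto
  also have "\<dots> \<le> \<bar>T_op l (\<lambda>s. c * exp (-\<nu> * s)) t\<bar>" unfolding T by (rule abs_ge_self)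
  finally show "a * exp (l*t) \<le> \<bar>T_op l (\<lambda>s. c * exp (-\<nu> * s)) t\<bar>" .
  have "a * exp (l*t) = exp (l*t) * c * ((1 - exp (-\<mu>/2))/\<mu>)" unfolding a by simp
  also have "\<dots> \<le> exp (l*t) * c * ((1 - exp (-\<mu>))/\<mu>)" using h2 c by (intro mult_left_mono) auto
  also have "\<dots> \<le> \<bar>S_op l (\<lambda>s. c * exp (-\<nu> * s)) t\<bar>" unfolding S by (rule abs_ge_self)
  finally show "a * exp (l*t) \<le> \<bar>S_op l (\<lambda>s. c * exp (-\<nu> * s)) t\<bar>" .
qed



lemma lower_generic:
  assumes "f0 \<in> borel_measurable I01" "Lp_norm p f0 \<le> 1"
    "ereal L \<le> Lp_norm p (T_op l f0)" "ereal L \<le> Lp_norm p (S_op l f0)"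
  shows "ereal L \<le> op_norm p (T_op l) \<and> ereal L \<le> op_norm p (S_op l)"
  using order_trans[OF assms(3) op_LB[OF assms(1,2), of "T_op l"]] order_trans[OF assms(4) op_LB[OF assms(1,2), of "S_op l"]] by auto

lemma lower_inf:
  "\<exists>\<rho>. (\<rho> \<longlongrightarrow> 1) at_top \<and> (\<forall>\<^sub>F l in at_top. ereal (C_const \<infinity> * exp l / l * \<rho> l) \<le> op_norm \<infinity> (T_op l)
      \<and> ereal (C_const \<infinity> * exp l / l * \<rho> l) \<le> op_norm \<infinity> (S_op l))"
proof (intro exI conjI)
  define \<rho> where "\<rho> = (\<lambda>l::real. (1 - exp (-l/2)) * exp (-1/l))"
  show "(\<rho> \<longlongrightarrow> 1) at_top" unfolding \<rho>_def by real_asymp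
  show "\<forall>\<^sub>F l in at_top. ereal (C_const \<infinity> * exp l / l * \<rho> l) \<le> op_norm \<infinity> (T_op l)
      \<and> ereal (C_const \<infinity> * exp l / l * \<rho> l) \<le> op_norm \<infinity> (S_op l)"
    using eventually_ge_at_top[of "2::real"]
  proof eventually_elim
    case (elim l)
    hence l: "l > 0" by simp
    define f0 where "f0 = (\<lambda>s::real. 1 * exp (-0 * s))"
    have f0m: "f0 \<in> borel_measurable I01" unfolding f0_def by measurable
    have f0n: "Lp_norm \<infinity> f0 \<le> 1" by (rule Lp_one_bound) (auto simp: f0_def)
    define a where "a = 1 * (1 - exp (-(l+0)/2))/(l+0)"
    have a0: "a \<ge> 0" unfolding a_def using l by (intro divide_nonneg_pos) auto
    define b where "b = 1 - 1/l^2"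
    have b: "1/2 \<le> b" "b < 1"
    proof -
      have "1/l^2 \<le> 1/2^2" using elim by (intro divide_left_mono power_mono) auto
      thus "1/2 \<le> b" unfolding b_def by simp
      show "b < 1" unfolding b_def using l by simp
    qed
    have eq: "a * exp (l*b) = C_const \<infinity> * exp l / l * \<rho> l"
    proof -
      have "l*b = l + (-1/l)" unfolding b_def using l by (simp add: field_simps power2_eq_square)
      hence "exp (l*b) = exp l * exp (-1/l)" by (simp only: exp_add)
      thus ?thesis unfolding a_def \<rho>_def C_const_def by simp
    qed
    have LT: "ereal (a * exp (l*b)) \<le> Lp_norm \<infinity> (T_op l f0)"
      by (rule LB_inf[OF T_meas[OF f0m] b l a0]) (unfold f0_def a_def, rule test_lower(1), use l in auto)
    have LS: "ereal (a * exp (l*b)) \<le> Lp_norm \<infinity> (S_op l f0)"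
      by (rule LB_inf[OF S_meas b l a0]) (unfold f0_def a_def, rule test_lower(2), use l in auto)
    show ?case using lower_generic[OF f0m f0n LT LS] unfolding eq .
  qed
qed

lemma lower_one:
  "\<exists>\<rho>. (\<rho> \<longlongrightarrow> 1) at_top \<and> (\<forall>\<^sub>F l in at_top. ereal (C_const 1 * exp l / l * \<rho> l) \<le> op_norm 1 (T_op l)
      \<and> ereal (C_const 1 * exp l / l * \<rho> l) \<le> op_norm 1 (S_op l))"
proof (intro exI conjI)
  define \<rho> where "\<rho> = (\<lambda>l::real. (l^2 * (1 - exp (-(l+l^2)/2))/(l+l^2)) * (1 - exp (-l/2)))"
  show "(\<rho> \<longlongrightarrow> 1) at_top" unfolding \<rho>_def by real_asymp
  show "\<forall>\<^sub>F l in at_top. ereal (C_const 1 * exp l / l * \<rho> l) \<le> op_norm 1 (T_op l)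
      \<and> ereal (C_const 1 * exp l / l * \<rho> l) \<le> op_norm 1 (S_op l)"
    using eventually_ge_at_top[of "2::real"]
  proof eventually_elim
    case (elim l)
    hence l: "l > 0" by simp
    have p1: "(1::ereal) = ereal 1" by simp
    define f0 where "f0 = (\<lambda>s::real. l^2 * exp (-(l^2) * s))"
    have f0m: "f0 \<in> borel_measurable I01" unfolding f0_def by measurable
    have f0n: "Lp_norm 1 f0 \<le> 1" unfolding f0_def
      by (rule test_norm_fin[OF p1]) (use l in auto)
    define a where "a = l^2 * (1 - exp (-(l+l^2)/2))/(l+l^2)"
    have hl2: "0 \<le> l^2" by simp
    have hl: "-l \<le> l^2" "0 < l + l^2" using l hl2 by linarith+
    have a0: "a \<ge> 0" unfolding a_def using l hl by (intro divide_nonneg_pos mult_nonneg_nonneg) auto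
    have eq: "a * ((exp (1*l) - exp (1*l/2))/(1*l)) powr (1/1) = C_const 1 * exp l / l * \<rho> l"
    proof -
      have nn: "0 \<le> (exp (1*l) - exp (1*l/2))/(1*l)" using l by (intro divide_nonneg_pos) auto
      have "exp l - exp (l/2) = exp l * (1 - exp (-l/2))"
        by (simp add: algebra_simps exp_add[symmetric])
      moreover have "0 \<le> exp l * (1 - exp (-(l/2)))" using l by simp
      ultimately show ?thesis using nn l unfolding a_def \<rho>_def C_const_def by (simp add: abs_of_nonneg mult_ac)
    qed
    have LT: "ereal (a * ((exp (1*l) - exp (1*l/2))/(1*l)) powr (1/1)) \<le> Lp_norm 1 (T_op l f0)"
      by (rule LB_fin[OF p1 order_refl l a0]) (unfold f0_def a_def, rule test_lower(1), use l in auto)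
    have LS: "ereal (a * ((exp (1*l) - exp (1*l/2))/(1*l)) powr (1/1)) \<le> Lp_norm 1 (S_op l f0)"
      by (rule LB_fin[OF p1 order_refl l a0]) (unfold f0_def a_def, rule test_lower(2), use l in auto)
    show ?case using lower_generic[OF f0m f0n LT LS] unfolding eq .
  qed
qed



lemma lower_r:
  assumes pr: "p = ereal r" and r1': "r > 1"
  shows "\<exists>\<rho>. (\<rho> \<longlongrightarrow> 1) at_top \<and> (\<forall>\<^sub>F l in at_top. ereal (C_const p * exp l / l * \<rho> l) \<le> op_norm p (T_op l)
      \<and> ereal (C_const p * exp l / l * \<rho> l) \<le> op_norm p (S_op l))"
proof -
  define q where "q = r/(r-1)"
  have q1: "q > 1" using r1' by (simp add: q_def less_divide_eq)
  have rq: "1/r + 1/q = 1" using r1' by (simp add: q_def field_simps)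
  have pn: "p \<noteq> \<infinity>" "p \<noteq> 1" using pr r1' by auto
  have p1: "1 \<le> p" using pr r1' by simp
  define \<rho> where "\<rho> = (\<lambda>l::real. (1 - exp (-(q*l)/2)) * (1 - exp (-(r*l)/2)) powr (1/r))"
  have "(\<rho> \<longlongrightarrow> 1) at_top" unfolding \<rho>_def using q1 r1' by real_asymp
  moreover have "\<forall>\<^sub>F l in at_top. ereal (C_const p * exp l / l * \<rho> l) \<le> op_norm p (T_op l)
      \<and> ereal (C_const p * exp l / l * \<rho> l) \<le> op_norm p (S_op l)"
    using eventually_gt_at_top[of "0::real"]
  proof eventually_elim
    case (elim l)
    hence l: "l > 0" by simp
    define c where "c = (q*l) powr (1/r)"
    define \<nu> where "\<nu> = l/(r-1)"
    have nu: "\<nu> > 0" unfolding \<nu>_def using l r1' by simp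
    have c0: "c \<ge> 0" unfolding c_def by simp
    have lnu: "l + \<nu> = q*l" unfolding \<nu>_def q_def using r1' by (simp add: field_simps)
    have cr: "c powr r = q*l" unfolding c_def using r1' q1 l by (simp add: powr_powr)
    have rnu: "r*\<nu> = q*l" unfolding \<nu>_def q_def using r1' by simp
    define f0 where "f0 = (\<lambda>s::real. c * exp (-\<nu> * s))"
    have f0m: "f0 \<in> borel_measurable I01" unfolding f0_def by measurable
    have f0n: "Lp_norm p f0 \<le> 1" unfolding f0_def
      by (rule test_norm_fin[OF pr _ nu c0]) (use r1' cr rnu in auto)
    define a where "a = c * (1 - exp (-(l+\<nu>)/2))/(l+\<nu>)"
    have a0: "a \<ge> 0" unfolding a_def using l nu c0 by (intro divide_nonneg_pos mult_nonneg_nonneg) auto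
    have K: "Kc p l = (q*l) powr (-1/q)" unfolding Kc_def q_def Let_def using pn pr
      by (simp only: if_False real_of_ereal.simps)
    have E: "Ec p l = (exp (r*l)/(r*l)) powr (1/r)" unfolding Ec_def Let_def using pn pr
      by (simp only: if_False real_of_ereal.simps)
    have a_eq: "a = Kc p l * (1 - exp (-(q*l)/2))"
    proof -
      have "c / (q*l) = (q*l) powr (1/r - 1)"
        unfolding c_def using q1 l by (simp add: powr_diff)
      also have "1/r - 1 = -1/q" using rq by (simp add: field_simps)
      finally have "c / (q*l) = Kc p l" using K by simp
      moreover have "a = (c/(q*l)) * (1 - exp (-(q*l)/2))"
        unfolding a_def lnu using q1 l by (simp add: field_simps)
      ultimately show ?thesis by simp
    qed
    have Y_eq: "((exp (r*l) - exp (r*l/2))/(r*l)) powr (1/r) = Ec p l * (1 - exp (-(r*l)/2)) powr (1/r)"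
    proof -
      have "exp (r*l) * exp (-(r*l)/2) = exp (r*l/2)" by (simp add: exp_add[symmetric])
      hence "(exp (r*l) - exp (r*l/2))/(r*l) = (exp (r*l)/(r*l)) * (1 - exp (-(r*l)/2))"
        by (simp add: field_simps)
      also have "\<dots> powr (1/r) = (exp (r*l)/(r*l)) powr (1/r) * (1 - exp (-(r*l)/2)) powr (1/r)"
        using r1' l by (intro powr_mult)
      finally show ?thesis unfolding E .
    qed
    have eq: "a * ((exp (r*l) - exp (r*l/2))/(r*l)) powr (1/r) = C_const p * exp l / l * \<rho> l"
      unfolding Y_eq a_eq KE[OF p1 l, symmetric] \<rho>_def by (simp add: mult_ac)
    have LT: "ereal (a * ((exp (r*l) - exp (r*l/2))/(r*l)) powr (1/r)) \<le> Lp_norm p (T_op l f0)"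
      by (rule LB_fin[OF pr _ l a0]) (use r1' in simp, unfold f0_def a_def, rule test_lower(1), use l nu c0 in auto)
    have LS: "ereal (a * ((exp (r*l) - exp (r*l/2))/(r*l)) powr (1/r)) \<le> Lp_norm p (S_op l f0)"
      by (rule LB_fin[OF pr _ l a0]) (use r1' in simp, unfold f0_def a_def, rule test_lower(2), use l nu c0 in auto)
    show ?case using lower_generic[OF f0m f0n LT LS] unfolding eq .
  qed
  ultimately show ?thesis by blast
qed



lemma Ec_pos: "1 \<le> p \<Longrightarrow> l > 0 \<Longrightarrow> Ec p l > 0"
proof -
  assume p: "1 \<le> p" and l: "l > 0"
  show ?thesis
  proof (cases "p = \<infinity>")
    case True thus ?thesis by (simp add: Ec_def)
  next
    case False
    then obtain r where pr: "p = ereal r" using p by (cases p) auto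
    have r1: "r \<ge> 1" using p pr by simp
    have "exp (r*l)/(r*l) > 0" using r1 l by simp
    thus ?thesis using False pr r1 l by (simp add: Ec_def)
  qed
qed

lemma op_nonneg: "1 \<le> p \<Longrightarrow> 0 \<le> op_norm p A"
proof -
  assume p: "1 \<le> p"
  have m: "(\<lambda>s::real. 0::real) \<in> borel_measurable I01" by simp
  have n: "Lp_norm p (\<lambda>s. 0) \<le> 1" by (rule Lp_one_bound[OF p]) auto
  show ?thesis using Lp_nonneg[OF p, of "A (\<lambda>s. 0)"] op_LB[OF m n, of A] by simp
qed

lemma real_between:
  assumes "ereal a \<le> x" "x \<le> ereal b"
  shows "a \<le> real_of_ereal x \<and> real_of_ereal x \<le> b"
  using assms by (cases x) auto

lemma lower_all:
  assumes p: "1 \<le> p"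
  shows "\<exists>\<rho>. (\<rho> \<longlongrightarrow> 1) at_top \<and> (\<forall>\<^sub>F l in at_top. ereal (C_const p * exp l / l * \<rho> l) \<le> op_norm p (T_op l)
      \<and> ereal (C_const p * exp l / l * \<rho> l) \<le> op_norm p (S_op l))"
proof (cases "p = \<infinity>")
  case True thus ?thesis using lower_inf by simp
next
  case False
  then obtain r where pr: "p = ereal r" using p by (cases p) auto
  have r1: "r \<ge> 1" using p pr by simp
  show ?thesis
  proof (cases "r = 1")
    case True
    hence "p = 1" using pr by (simp add: one_ereal_def)
    thus ?thesis using lower_one by simp
  next
    case False
    thus ?thesis using lower_r[OF pr] r1 by simp
  qed
qed

theorem lemma3p2:
  fixes p :: ereal
  assumes "1 \<le> p"
  shows "((\<lambda>l. real_of_ereal (op_norm p (\<lambda>f t. S_op l f t - T_op l f t))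
                 / real_of_ereal (op_norm p (S_op l))) \<longlongrightarrow> 0) at_top \<and>
         (\<lambda>l. real_of_ereal (op_norm p (T_op l))) \<sim>[at_top] (\<lambda>l. C_const p * exp l / l)"
proof -
  note p = assms
  define U where "U = (\<lambda>l. C_const p * exp l / l)"
  obtain \<rho> where \<rho>: "(\<rho> \<longlongrightarrow> 1) at_top"
    and low: "\<forall>\<^sub>F l in at_top. ereal (U l * \<rho> l) \<le> op_norm p (T_op l)
      \<and> ereal (U l * \<rho> l) \<le> op_norm p (S_op l)"
    using lower_all[OF p] unfolding U_def by blast
  have half: "\<forall>\<^sub>F l in at_top. \<rho> l > 1/2"
    using order_tendstoD(1)[OF \<rho>, of "1/2"] by simp
  have UK: "U l = Kc p l * Ec p l" if "l > 0" for l
    unfolding U_def using KE[OF p that] by simp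
  have Upos: "U l > 0" if "l > 0" for l
    using UK[OF that] Kc_pos[OF p that] Ec_pos[OF p that] by simp
  have Cne: "C_const p \<noteq> 0" using Upos[of 1] unfolding U_def by auto
  have main: "\<forall>\<^sub>F l in at_top.
      U l * \<rho> l \<le> real_of_ereal (op_norm p (T_op l)) \<and> real_of_ereal (op_norm p (T_op l)) \<le> U l \<and>
      U l * \<rho> l \<le> real_of_ereal (op_norm p (S_op l)) \<and>
      0 \<le> real_of_ereal (op_norm p (\<lambda>f t. S_op l f t - T_op l f t)) \<and>
      real_of_ereal (op_norm p (\<lambda>f t. S_op l f t - T_op l f t)) \<le> 1 \<and> \<rho> l > 1/2 \<and> U l > 0 \<and> l > 0"
    using low half eventually_gt_at_top[of "0::real"]
  proof eventually_elim
    case (elim l)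
    hence l: "l > 0" by simp
    have uT: "op_norm p (T_op l) \<le> ereal (U l)" using upper_all(1)[OF p l] UK[OF l] by simp
    have uS: "op_norm p (S_op l) \<le> ereal (U l)" using upper_all(2)[OF p l] UK[OF l] by simp
    have uD: "op_norm p (\<lambda>f t. S_op l f t - T_op l f t) \<le> ereal 1" using upper_all(3)[OF p l] by (simp only: one_ereal_def)
    have lD: "ereal 0 \<le> op_norm p (\<lambda>f t. S_op l f t - T_op l f t)" using op_nonneg[OF p] by (simp only: zero_ereal_def)
    show ?case using real_between[OF conjunct1[OF elim(1)] uT] real_between[OF conjunct2[OF elim(1)] uS]
        real_between[OF lD uD] elim(2) Upos[OF l] l by auto
  qed
  have part1: "((\<lambda>l. real_of_ereal (op_norm p (\<lambda>f t. S_op l f t - T_op l f t))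
                 / real_of_ereal (op_norm p (S_op l))) \<longlongrightarrow> 0) at_top"
  proof (rule tendsto_sandwich[of "\<lambda>_. 0" _ _ "\<lambda>l. (l / exp l) * ((1 / C_const p) * (1 / \<rho> l))"])
    show "\<forall>\<^sub>F l in at_top. 0 \<le> real_of_ereal (op_norm p (\<lambda>f t. S_op l f t - T_op l f t))
                 / real_of_ereal (op_norm p (S_op l))"
      using main
    proof eventually_elim
      case (elim l)
      have "0 < U l * \<rho> l" using elim by simp
      hence "0 \<le> real_of_ereal (op_norm p (S_op l))" using elim by linarith
      thus ?case using elim by (intro divide_nonneg_nonneg) auto
    qed
    show "\<forall>\<^sub>F l in at_top. real_of_ereal (op_norm p (\<lambda>f t. S_op l f t - T_op l f t))
                 / real_of_ereal (op_norm p (S_op l)) \<le> (l / exp l) * ((1 / C_const p) * (1 / \<rho> l))"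
      using main
    proof eventually_elim
      case (elim l)
      have pos: "0 < U l * \<rho> l" using elim by simp
      have pos2: "0 < real_of_ereal (op_norm p (S_op l))" using pos elim by linarith
      have "real_of_ereal (op_norm p (\<lambda>f t. S_op l f t - T_op l f t)) / real_of_ereal (op_norm p (S_op l))
          \<le> 1 / real_of_ereal (op_norm p (S_op l))"
        using elim pos2 by (intro divide_right_mono) auto
      also have "\<dots> \<le> 1 / (U l * \<rho> l)" using elim pos pos2 by (intro divide_left_mono) auto
      also have "\<dots> = (l / exp l) * ((1 / C_const p) * (1 / \<rho> l))"
        unfolding U_def using elim Cne by (simp add: field_simps)
      finally show ?case .
    qed
    have "((\<lambda>l. (l / exp l) * ((1 / C_const p) * (1 / \<rho> l))) \<longlongrightarrow> 0 * ((1 / C_const p) * (1 / 1))) at_top"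
      by (intro tendsto_intros \<rho>) (real_asymp, simp)
    thus "((\<lambda>l. (l / exp l) * ((1 / C_const p) * (1 / \<rho> l))) \<longlongrightarrow> 0) at_top" by simp
  qed simp
  have part2: "(\<lambda>l. real_of_ereal (op_norm p (T_op l))) \<sim>[at_top] U"
  proof (rule asymp_equivI')
    show "((\<lambda>l. real_of_ereal (op_norm p (T_op l)) / U l) \<longlongrightarrow> 1) at_top"
    proof (rule tendsto_sandwich[of \<rho> _ _ "\<lambda>_. 1"])
      show "\<forall>\<^sub>F l in at_top. \<rho> l \<le> real_of_ereal (op_norm p (T_op l)) / U l"
        using main by eventually_elim (auto simp: pos_le_divide_eq mult.commute)
      show "\<forall>\<^sub>F l in at_top. real_of_ereal (op_norm p (T_op l)) / U l \<le> 1"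
        using main by eventually_elim (auto simp: pos_divide_le_eq)
    qed (use \<rho> in auto)
  qed
  show ?thesis using part1 part2 unfolding U_def by blast
qed

end
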